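(* (a) Let $u:\mathbb{Z}^k\to\mathbb{C}$ satisfy, for all $1\le i\le k-1$ and all $\vec n\in\mathbb{Z}^k$ with $n_i=n_{i+1}$, the backward two-body boundary condition $\big((\nabla^{\mathrm{bwd}}_i-q\nabla^{\mathrm{bwd}}_{i+1})u\big)(\vec n)=0$. Then for every $\vec n\in\mathbb{W}^k$, $(1-q)\sum_{i=1}^k(\nabla^{\mathrm{bwd}}_iu)(\vec n)=(\mathcal{H}^{\mathrm{bwd}}u)(\vec n)$ (with $\mathcal{H}^{\mathrm{bwd}}$ applied to the restriction of $u$ to $\mathbb{W}^k$). (b) Let $u:\mathbb{Z}^k\to\mathbb{C}$ satisfy, for all $1\le i\le k-1$ and all $\vec n\in\mathbb{Z}^k$ with $n_i=n_{i+1}$, the forward two-body boundary condition $\big((q\nabla^{\mathrm{fwd}}_i-\nabla^{\mathrm{fwd}}_{i+1})u\big)(\vec n)=0$. Then for every $\vec n\in\mathbb{W}^k$, $(1-q)\sum_{i=1}^k(\nabla^{\mathrm{fwd}}_iu)(\vec n)=(\mathcal{H}^{\mathrm{cfwd}}u)(\vec n)$.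
   Context: Fix $q\in(0,1)$ and an integer $k\ge1$. Let $\mathbb{W}^k=\{\vec n\in\mathbb{Z}^k: n_1\ge\cdots\ge n_k\}$; $\vec n_i^{\pm}=(n_1,\dots,n_i\pm1,\dots,n_k)$. For $\vec n\in\mathbb{W}^k$ write $n_1=\cdots=n_{c_1}>n_{c_1+1}=\cdots=n_{c_1+c_2}>\cdots$, with $M=M(\vec n)$ clusters of sizes $(c_1,\dots,c_M)$. For $u:\mathbb{Z}^k\to\mathbb{C}$, $(\nabla^{\mathrm{bwd}}_iu)(\vec n)=u(\vec n_i^-)-u(\vec n)$ and $(\nabla^{\mathrm{fwd}}_iu)(\vec n)=u(\vec n_i^+)-u(\vec n)$. The $q$-Boson backward generator is $(\mathcal{H}^{\mathrm{bwd}}f)(\vec n)=\sum_{i=1}^{M}(1-q^{c_i})\big(f(\vec n^{-}_{c_1+\cdots+c_i})-f(\vec n)\big)$ and the conjugated forward generator is $(\mathcal{H}^{\mathrm{cfwd}}f)(\vec n)=\sum_{i=1}^{M}(1-q^{c_i})\big(f(\vec n^{+}_{c_1+\cdots+c_{i-1}+1})-f(\vec n)\big)$ (with index $1$ when $i=1$), for $f:\mathbb{W}^k\to\mathbb{C}$. *)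

theory Defs
  imports Complex_Main
begin

text \<open>Vectors in Z^k are int lists of length k; coordinates are 0-based
  (coordinate i of the list is n_{i+1} of the paper).\<close>

definition Weyl :: "nat \<Rightarrow> int list set" where
  "Weyl k = {n. length n = k \<and> (\<forall>i. Suc i < k \<longrightarrow> n ! i \<ge> n ! Suc i)}"

definition vdec :: "int list \<Rightarrow> nat \<Rightarrow> int list" where
  "vdec n i = n[i := n ! i - 1]"

definition vinc :: "int list \<Rightarrow> nat \<Rightarrow> int list" where
  "vinc n i = n[i := n ! i + 1]"

definition nabla_bwd :: "nat \<Rightarrow> (int list \<Rightarrow> complex) \<Rightarrow> int list \<Rightarrow> complex" where
  "nabla_bwd i u n = u (vdec n i) - u n"

definition nabla_fwd :: "nat \<Rightarrow> (int list \<Rightarrow> complex) \<Rightarrow> int list \<Rightarrow> complex" where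
  "nabla_fwd i u n = u (vinc n i) - u n"

function clusters :: "int list \<Rightarrow> nat list" where
  "clusters [] = []"
| "clusters (x # xs) =
     (let m = length (takeWhile (\<lambda>y. y = x) xs) in Suc m # clusters (drop m xs))"
  by pat_completeness auto
termination by (relation "measure length") auto

text \<open>Backward generator: the last particle of cluster i (0-based position
  c_1+...+c_i - 1) jumps down.\<close>
definition H_bwd :: "real \<Rightarrow> (int list \<Rightarrow> complex) \<Rightarrow> int list \<Rightarrow> complex" where
  "H_bwd q f n = (let c = clusters n in
     \<Sum>i<length c. (1 - complex_of_real q ^ (c ! i)) *
        (f (vdec n (sum_list (take (Suc i) c) - 1)) - f n))"

text \<open>Conjugated forward generator: the first particle of cluster i (0-based
  position c_1+...+c_{i-1}) jumps up.\<close>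
definition H_cfwd :: "real \<Rightarrow> (int list \<Rightarrow> complex) \<Rightarrow> int list \<Rightarrow> complex" where
  "H_cfwd q f n = (let c = clusters n in
     \<Sum>i<length c. (1 - complex_of_real q ^ (c ! i)) *
        (f (vinc n (sum_list (take i c))) - f n))"

end

theory Submission
  imports Defs
begin

lemma sum_split_add: "(\<Sum>j<a+b. (f::nat\<Rightarrow>complex) j) = (\<Sum>j<a. f j) + (\<Sum>j<b. f (a+j))"
  by (induction b) (simp_all add: add.assoc)

lemma blk_bwd:
  fixes g :: "nat \<Rightarrow> complex"
  assumes "\<And>j. j < m \<Longrightarrow> g (p+j) = Q * g (p + Suc j)"
  shows "(1-Q) * (\<Sum>j<Suc m. g(p+j)) = (1 - Q^Suc m) * g(p+m)"
proof -
  have key0: "t \<le> m \<Longrightarrow> g(p+(m-t)) = Q^t * g(p+m)" for t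
  proof (induct t)
    case 0 then show ?case by simp
  next
    case (Suc t)
    have lt: "m - Suc t < m" using Suc.prems by simp
    have eq: "p + Suc (m - Suc t) = p + (m - t)" using Suc.prems by simp
    have "g (p + (m - Suc t)) = Q * g (p + (m - t))" using assms[OF lt] unfolding eq .
    also have "g (p + (m-t)) = Q^t * g(p+m)" using Suc.hyps Suc.prems by simp
    finally show ?case by (simp add: mult.assoc)
  qed
  have key: "j \<le> m \<Longrightarrow> g(p+j) = Q^(m-j) * g(p+m)" for j
    using key0[of "m-j"] by simp
  have "(\<Sum>j<Suc m. g(p+j)) = (\<Sum>j<Suc m. Q^(Suc m - Suc j) * g(p+m))"
  proof (rule sum.cong)
    fix j assume "j \<in> {..<Suc m}"
    then have "j \<le> m" by simp
    then show "g(p+j) = Q^(Suc m - Suc j) * g(p+m)" using key[of j] by simp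
  qed simp
  also have "\<dots> = (\<Sum>j<Suc m. Q^(Suc m - Suc j)) * g(p+m)" by (rule sum_distrib_right[symmetric])
  finally have "(1-Q) * (\<Sum>j<Suc m. g(p+j)) = ((1-Q) * (\<Sum>j<Suc m. Q^(Suc m - Suc j))) * g(p+m)"
    by (simp only: mult.assoc)
  also have "(1-Q) * (\<Sum>j<Suc m. Q^(Suc m - Suc j)) = 1 - Q^Suc m" by (rule one_diff_power_eq'[symmetric])
  finally show ?thesis .
qed

lemma blk_fwd:
  fixes g :: "nat \<Rightarrow> complex"
  assumes "\<And>j. j < m \<Longrightarrow> Q * g (p+j) = g (p + Suc j)"
  shows "(1-Q) * (\<Sum>j<Suc m. g(p+j)) = (1 - Q^Suc m) * g p"
proof -
  have key: "j \<le> m \<Longrightarrow> g(p+j) = Q^j * g p" for j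
  proof (induct j)
    case 0 then show ?case by simp
  next
    case (Suc j)
    then show ?case using assms[of j] by (simp add: mult.assoc)
  qed
  have "(\<Sum>j<Suc m. g(p+j)) = (\<Sum>j<Suc m. Q^j * g p)"
  proof (rule sum.cong)
    fix j assume "j \<in> {..<Suc m}"
    then have "j \<le> m" by simp
    then show "g(p+j) = Q^j * g p" by (rule key)
  qed simp
  also have "\<dots> = (\<Sum>j<Suc m. Q^j) * g p" by (rule sum_distrib_right[symmetric])
  finally have "(\<Sum>j<Suc m. g(p+j)) = (\<Sum>j<Suc m. Q^j) * g p" .
  then have "(1-Q) * (\<Sum>j<Suc m. g(p+j)) = ((1-Q) * (\<Sum>j<Suc m. Q^j)) * g p"
    by (simp only: mult.assoc)
  also have "(1-Q)*(\<Sum>j<Suc m. Q^j) = 1 - Q^Suc m" by (rule one_diff_power_eq[symmetric])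
  finally show ?thesis .
qed

lemma tw_facts:
  assumes "m = length (takeWhile (\<lambda>y. y = x) xs)"
  shows "m \<le> length xs" "\<And>j. j \<le> m \<Longrightarrow> (x#xs) ! j = x"
proof -
  show "m \<le> length xs" using assms by (simp add: length_takeWhile_le)
  fix j assume "j \<le> m"
  show "(x#xs) ! j = x"
  proof (cases j)
    case 0 then show ?thesis by simp
  next
    case (Suc j')
    then have "j' < m" using \<open>j \<le> m\<close> by simp
    then have "takeWhile (\<lambda>y. y = x) xs ! j' = xs ! j'" using assms
      by (simp add: takeWhile_nth)
    moreover have "takeWhile (\<lambda>y. y = x) xs ! j' \<in> set (takeWhile (\<lambda>y. y = x) xs)"
      using \<open>j' < m\<close> assms by simp
    ultimately show ?thesis using Suc set_takeWhileD by fastforce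
  qed
qed

lemma clusters_pos: "c \<in> set (clusters xs) \<Longrightarrow> c > 0"
  by (induction xs rule: clusters.induct) (auto simp: Let_def)

lemma main_bwd:
  fixes g :: "nat \<Rightarrow> complex"
  assumes cond: "\<And>j. Suc j < length N \<Longrightarrow> N!j = N!Suc j \<Longrightarrow> g j = Q * g (Suc j)"
  shows "drop p N = xs \<Longrightarrow> (1-Q) * (\<Sum>j<length xs. g(p+j)) =
    (\<Sum>i<length (clusters xs). (1 - Q^(clusters xs!i)) * g(p + sum_list(take (Suc i) (clusters xs)) - 1))"
proof (induction xs arbitrary: p rule: clusters.induct)
  case 1 then show ?case by simp
next
  case (2 x xs)
  define m where "m = length (takeWhile (\<lambda>y. y = x) xs)"
  note tw = tw_facts[OF m_def]
  have cl: "clusters (x#xs) = Suc m # clusters (drop m xs)" by (simp add: m_def Let_def)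
  have "length (drop p N) = Suc (length xs)" using "2.prems" by simp
  then have len: "length N = p + Suc (length xs)" by simp
  have Nx: "j \<le> m \<Longrightarrow> N ! (p+j) = x" for j
  proof -
    assume j: "j \<le> m"
    have "N ! (p+j) = drop p N ! j" using j tw(1) len by (simp add: nth_drop)
    then show ?thesis using tw(2)[OF j] "2.prems" by simp
  qed
  have blk: "(1-Q) * (\<Sum>j<Suc m. g(p+j)) = (1 - Q^Suc m) * g(p+m)"
  proof (rule blk_bwd)
    fix j assume "j < m"
    then show "g (p + j) = Q * g (p + Suc j)"
      using cond[of "p+j"] Nx[of j] Nx[of "Suc j"] tw(1) len by simp
  qed
  have "drop (Suc m) (drop p N) = drop m xs" using "2.prems" by simp
  then have dr: "drop (p + Suc m) N = drop m xs" by (simp add: drop_drop add.commute)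
  have IH: "(1-Q) * (\<Sum>j<length (drop m xs). g(p + Suc m + j)) =
    (\<Sum>i<length (clusters (drop m xs)). (1 - Q^(clusters (drop m xs)!i)) *
       g(p + Suc m + sum_list(take (Suc i) (clusters (drop m xs))) - 1))"
    using "2.IH"[OF m_def dr] by (simp add: add.assoc)
  have lenx: "length (x#xs) = Suc m + length (drop m xs)" using tw(1) by simp
  have "(1-Q) * (\<Sum>j<length (x#xs). g(p+j)) =
      (1-Q) * (\<Sum>j<Suc m. g(p+j)) + (1-Q) * (\<Sum>j<length (drop m xs). g(p + Suc m + j))"
    unfolding lenx sum_split_add by (simp only: distrib_left add.assoc)
  also have "\<dots> = (1 - Q^Suc m) * g(p+m) + (\<Sum>i<length (clusters (drop m xs)). (1 - Q^(clusters (drop m xs)!i)) *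
       g(p + Suc m + sum_list(take (Suc i) (clusters (drop m xs))) - 1))"
    by (simp only: blk IH)
  also have "\<dots> = (\<Sum>i<length (clusters (x#xs)). (1 - Q^(clusters (x#xs)!i)) * g(p + sum_list(take (Suc i) (clusters (x#xs))) - 1))"
    unfolding cl length_Cons sum.lessThan_Suc_shift by (simp add: add.assoc)
  finally show ?case .
qed

lemma main_fwd:
  fixes g :: "nat \<Rightarrow> complex"
  assumes cond: "\<And>j. Suc j < length N \<Longrightarrow> N!j = N!Suc j \<Longrightarrow> Q * g j = g (Suc j)"
  shows "drop p N = xs \<Longrightarrow> (1-Q) * (\<Sum>j<length xs. g(p+j)) =
    (\<Sum>i<length (clusters xs). (1 - Q^(clusters xs!i)) * g(p + sum_list(take i (clusters xs))))"
proof (induction xs arbitrary: p rule: clusters.induct)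
  case 1 then show ?case by simp
next
  case (2 x xs)
  define m where "m = length (takeWhile (\<lambda>y. y = x) xs)"
  note tw = tw_facts[OF m_def]
  have cl: "clusters (x#xs) = Suc m # clusters (drop m xs)" by (simp add: m_def Let_def)
  have "length (drop p N) = Suc (length xs)" using "2.prems" by simp
  then have len: "length N = p + Suc (length xs)" by simp
  have Nx: "j \<le> m \<Longrightarrow> N ! (p+j) = x" for j
  proof -
    assume j: "j \<le> m"
    have "N ! (p+j) = drop p N ! j" using j tw(1) len by (simp add: nth_drop)
    then show ?thesis using tw(2)[OF j] "2.prems" by simp
  qed
  have blk: "(1-Q) * (\<Sum>j<Suc m. g(p+j)) = (1 - Q^Suc m) * g p"
  proof (rule blk_fwd)
    fix j assume "j < m"
    then show "Q * g (p + j) = g (p + Suc j)"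
      using cond[of "p+j"] Nx[of j] Nx[of "Suc j"] tw(1) len by simp
  qed
  have "drop (Suc m) (drop p N) = drop m xs" using "2.prems" by simp
  then have dr: "drop (p + Suc m) N = drop m xs" by (simp add: drop_drop add.commute)
  have IH: "(1-Q) * (\<Sum>j<length (drop m xs). g(p + Suc m + j)) =
    (\<Sum>i<length (clusters (drop m xs)). (1 - Q^(clusters (drop m xs)!i)) *
       g(p + Suc m + sum_list(take i (clusters (drop m xs)))))"
    using "2.IH"[OF m_def dr] by (simp add: add.assoc)
  have lenx: "length (x#xs) = Suc m + length (drop m xs)" using tw(1) by simp
  have "(1-Q) * (\<Sum>j<length (x#xs). g(p+j)) =
      (1-Q) * (\<Sum>j<Suc m. g(p+j)) + (1-Q) * (\<Sum>j<length (drop m xs). g(p + Suc m + j))"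
    unfolding lenx sum_split_add by (simp only: distrib_left add.assoc)
  also have "\<dots> = (1 - Q^Suc m) * g p + (\<Sum>i<length (clusters (drop m xs)). (1 - Q^(clusters (drop m xs)!i)) *
       g(p + Suc m + sum_list(take i (clusters (drop m xs)))))"
    by (simp only: blk IH)
  also have "\<dots> = (\<Sum>i<length (clusters (x#xs)). (1 - Q^(clusters (x#xs)!i)) * g(p + sum_list(take i (clusters (x#xs)))))"
    unfolding cl length_Cons sum.lessThan_Suc_shift by (simp add: add.assoc)
  finally show ?case .
qed


theorem proposition2p5:
  fixes q :: real and k :: nat
  assumes "0 < q" and "q < 1" and "1 \<le> k"
  shows "(\<forall>u :: int list \<Rightarrow> complex.
            (\<forall>i n. Suc i < k \<longrightarrow> length n = k \<longrightarrow> n ! i = n ! Suc i \<longrightarrow>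
               nabla_bwd i u n - complex_of_real q * nabla_bwd (Suc i) u n = 0) \<longrightarrow>
            (\<forall>n \<in> Weyl k.
               (1 - complex_of_real q) * (\<Sum>i<k. nabla_bwd i u n) = H_bwd q u n))
       \<and> (\<forall>u :: int list \<Rightarrow> complex.
            (\<forall>i n. Suc i < k \<longrightarrow> length n = k \<longrightarrow> n ! i = n ! Suc i \<longrightarrow>
               complex_of_real q * nabla_fwd i u n - nabla_fwd (Suc i) u n = 0) \<longrightarrow>
            (\<forall>n \<in> Weyl k.
               (1 - complex_of_real q) * (\<Sum>i<k. nabla_fwd i u n) = H_cfwd q u n))"
proof (intro conjI allI impI ballI)
  let ?Q = "complex_of_real q"
  fix u :: "int list \<Rightarrow> complex" and n
  assume c: "\<forall>i n. Suc i < k \<longrightarrow> length n = k \<longrightarrow> n ! i = n ! Suc i \<longrightarrow>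
               nabla_bwd i u n - complex_of_real q * nabla_bwd (Suc i) u n = 0"
    and n: "n \<in> Weyl k"
  have len: "length n = k" using n by (simp add: Weyl_def)
  have "(1 - ?Q) * (\<Sum>j<length n. nabla_bwd (0+j) u n) =
    (\<Sum>i<length (clusters n). (1 - ?Q^(clusters n!i)) * nabla_bwd (0 + sum_list(take (Suc i) (clusters n)) - 1) u n)"
  proof (rule main_bwd[where N=n and g="\<lambda>j. nabla_bwd j u n" and p=0 and xs=n and Q="?Q"])
    fix j assume j: "Suc j < length n" "n ! j = n ! Suc j"
    have "nabla_bwd j u n - ?Q * nabla_bwd (Suc j) u n = 0"
      by (rule c[rule_format]) (use j len in simp_all)
    then show "nabla_bwd j u n = ?Q * nabla_bwd (Suc j) u n" by simp
  next
    show "drop 0 n = n" by simp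
  qed
  then show "(1 - ?Q) * (\<Sum>i<k. nabla_bwd i u n) = H_bwd q u n"
    unfolding H_bwd_def Let_def nabla_bwd_def[symmetric] by (simp only: add_0 len)
next
  let ?Q = "complex_of_real q"
  fix u :: "int list \<Rightarrow> complex" and n
  assume c: "\<forall>i n. Suc i < k \<longrightarrow> length n = k \<longrightarrow> n ! i = n ! Suc i \<longrightarrow>
               complex_of_real q * nabla_fwd i u n - nabla_fwd (Suc i) u n = 0"
    and n: "n \<in> Weyl k"
  have len: "length n = k" using n by (simp add: Weyl_def)
  have "(1 - ?Q) * (\<Sum>j<length n. nabla_fwd (0+j) u n) =
    (\<Sum>i<length (clusters n). (1 - ?Q^(clusters n!i)) * nabla_fwd (0 + sum_list(take i (clusters n))) u n)"
  proof (rule main_fwd[where N=n and g="\<lambda>j. nabla_fwd j u n" and p=0 and xs=n and Q="?Q"])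
    fix j assume j: "Suc j < length n" "n ! j = n ! Suc j"
    have "?Q * nabla_fwd j u n - nabla_fwd (Suc j) u n = 0"
      by (rule c[rule_format]) (use j len in simp_all)
    then show "?Q * nabla_fwd j u n = nabla_fwd (Suc j) u n" by simp
  next
    show "drop 0 n = n" by simp
  qed
  then show "(1 - ?Q) * (\<Sum>i<k. nabla_fwd i u n) = H_cfwd q u n"
    unfolding H_cfwd_def Let_def nabla_fwd_def[symmetric] by (simp only: add_0 len)
qed

end
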